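(* Consider the sequence of binary classification problems indexed by $m$ described in the context, with $N=n$, and suppose that $n=o(m)$, $m=o(n^2)$, and moreover $m=o(n^2/(\log n)^2)$ as $m\to\infty$. Let $\phi^F=\{\phi^F_m\}$ be the $\ell_2$-norm based classifier $\phi^F_m=\mathbb I\{F_n\ge 0\}$, where $$F_n=\Big\|\tfrac1n a^z-\tfrac1N a^x\Big\|_2^2-\Big\|\tfrac1n a^z-\tfrac1N a^y\Big\|_2^2 .$$ Then $J(\phi^F)=0$.
   Context: For each integer $m\ge1$ let $[m]=\{1,\dots,m\}$ be the alphabet. The sample sizes $N=N(m)$ and $n=n(m)$ are positive integers with $N,n\to\infty$ as $m\to\infty$. Fix constants $\varepsilon>0$ and $\bar c>0$ (a large positive constant). Let $\mathcal P_m$ be the set of pairs $(\pi,\mu)$ of probability distributions on $[m]$ with $\|\mu-\pi\|_1\ge\varepsilon$, $\max_j\pi_j\le \bar c/m$ and $\max_j\mu_j\le\bar c/m$. Two training sequences $X=(X_1,\dots,X_N)$ i.i.d. with marginal $\pi$ and $Y=(Y_1,\dots,Y_N)$ i.i.d. with marginal $\mu$, and a test sequence $Z=(Z_1,\dots,Z_n)$ i.i.d. with marginal $\nu$ are observed, the three sequences being independent; $\mathsf P_{(\pi,\mu,\nu)}$ denotes the corresponding probability. A classifier is a sequence $\phi=\{\phi_m\}$ of functions $\phi_m:[m]^N\times[m]^N\times[m]^n\to\{0,1\}$ (output $1$ means deciding that $Z$ comes from $\mu$). Its worst-case average probability of error is $$P_e(\phi_m)=\sup_{(\pi,\mu)\in\mathcal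 P_m}\Big[\tfrac12\mathsf P_{(\pi,\mu,\pi)}\{\phi_m=1\}+\tfrac12\mathsf P_{(\pi,\mu,\mu)}\{\phi_m=0\}\Big].$$ With $r(N,n,m)=\min\{N^2,Nn\}/m$, the generalized error exponent of $\phi$ is $J(\phi)=-\limsup_{m\to\infty}\frac{1}{r(N,n,m)}\log P_e(\phi_m)$. For $j\in[m]$, $a^x_j$, $a^y_j$, $a^z_j$ denote the number of times symbol $j$ appears in $X$, $Y$, $Z$ respectively, and $a^x=(a^x_j)_{j\in[m]}$ etc.; $\mathbb I$ is the indicator function. *)

theory Defs
  imports Complex_Main "HOL-Library.FuncSet" "HOL-Library.Landau_Symbols"
    "HOL-Library.Extended_Real" "HOL-Library.Liminf_Limsup"
begin

definition seqs :: "nat \<Rightarrow> nat \<Rightarrow> (nat \<Rightarrow> nat) set" where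
  "seqs m k = PiE {..<k} (\<lambda>_. {1..m})"

definition seq_prob :: "(nat \<Rightarrow> real) \<Rightarrow> nat \<Rightarrow> (nat \<Rightarrow> nat) \<Rightarrow> real" where
  "seq_prob p k x = (\<Prod>i<k. p (x i))"

text \<open>P_(pi,mu,nu){E(X,Y,Z)} for X,Y of length N and Z of length n, independent.\<close>
definition prob_event :: "nat \<Rightarrow> nat \<Rightarrow> nat \<Rightarrow> (nat \<Rightarrow> real) \<Rightarrow> (nat \<Rightarrow> real) \<Rightarrow> (nat \<Rightarrow> real)
    \<Rightarrow> ((nat \<Rightarrow> nat) \<Rightarrow> (nat \<Rightarrow> nat) \<Rightarrow> (nat \<Rightarrow> nat) \<Rightarrow> bool) \<Rightarrow> real" where
  "prob_event m N n p q r E =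
     (\<Sum>x\<in>seqs m N. \<Sum>y\<in>seqs m N. \<Sum>z\<in>seqs m n.
        seq_prob p N x * seq_prob q N y * seq_prob r n z * (if E x y z then 1 else 0))"

definition is_dist :: "nat \<Rightarrow> (nat \<Rightarrow> real) \<Rightarrow> bool" where
  "is_dist m p \<longleftrightarrow> (\<forall>j\<in>{1..m}. 0 \<le> p j) \<and> (\<Sum>j\<in>{1..m}. p j) = 1"

definition Pclass :: "nat \<Rightarrow> real \<Rightarrow> real \<Rightarrow> ((nat \<Rightarrow> real) \<times> (nat \<Rightarrow> real)) set" where
  "Pclass m \<epsilon> c = {(p, q). is_dist m p \<and> is_dist m q \<and> (\<Sum>j\<in>{1..m}. \<bar>q j - p j\<bar>) \<ge> \<epsilon>
        \<and> (\<forall>j\<in>{1..m}. p j \<le> c / real m) \<and> (\<forall>j\<in>{1..m}. q j \<le> c / real m)}"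

text \<open>Classifier output True means "decide Z comes from mu" (output 1).\<close>
definition avg_err :: "nat \<Rightarrow> nat \<Rightarrow> nat
    \<Rightarrow> ((nat \<Rightarrow> nat) \<Rightarrow> (nat \<Rightarrow> nat) \<Rightarrow> (nat \<Rightarrow> nat) \<Rightarrow> bool)
    \<Rightarrow> (nat \<Rightarrow> real) \<Rightarrow> (nat \<Rightarrow> real) \<Rightarrow> real" where
  "avg_err m N n \<phi> p q =
     1/2 * prob_event m N n p q p \<phi> + 1/2 * prob_event m N n p q q (\<lambda>x y z. \<not> \<phi> x y z)"

definition worst_err :: "nat \<Rightarrow> nat \<Rightarrow> nat \<Rightarrow> real \<Rightarrow> real
    \<Rightarrow> ((nat \<Rightarrow> nat) \<Rightarrow> (nat \<Rightarrow> nat) \<Rightarrow> (nat \<Rightarrow> nat) \<Rightarrow> bool) \<Rightarrow> real" where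
  "worst_err m N n \<epsilon> c \<phi> = Sup ((\<lambda>(p, q). avg_err m N n \<phi> p q) ` Pclass m \<epsilon> c)"

definition elog :: "real \<Rightarrow> ereal" where
  "elog x = (if x > 0 then ereal (ln x) else -\<infinity>)"

definition rate :: "nat \<Rightarrow> nat \<Rightarrow> nat \<Rightarrow> real" where
  "rate N n m = real (min (N^2) (N * n)) / real m"

definition err_exponent :: "(nat \<Rightarrow> nat) \<Rightarrow> (nat \<Rightarrow> nat) \<Rightarrow> real \<Rightarrow> real
    \<Rightarrow> (nat \<Rightarrow> (nat \<Rightarrow> nat) \<Rightarrow> (nat \<Rightarrow> nat) \<Rightarrow> (nat \<Rightarrow> nat) \<Rightarrow> bool) \<Rightarrow> ereal" where
  "err_exponent N n \<epsilon> c \<phi> =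
     - limsup (\<lambda>m. elog (worst_err m (N m) (n m) \<epsilon> c (\<phi> m)) / ereal (rate (N m) (n m) m))"

definition count :: "nat \<Rightarrow> (nat \<Rightarrow> nat) \<Rightarrow> nat \<Rightarrow> nat" where
  "count k x j = card {i. i < k \<and> x i = j}"

definition F_stat :: "nat \<Rightarrow> nat \<Rightarrow> nat \<Rightarrow> (nat \<Rightarrow> nat) \<Rightarrow> (nat \<Rightarrow> nat) \<Rightarrow> (nat \<Rightarrow> nat) \<Rightarrow> real" where
  "F_stat m N n x y z =
     (\<Sum>j\<in>{1..m}. (real (count n z j) / real n - real (count N x j) / real N)\<^sup>2)
   - (\<Sum>j\<in>{1..m}. (real (count n z j) / real n - real (count N y j) / real N)\<^sup>2)"

definition phi_F :: "nat \<Rightarrow> nat \<Rightarrow> nat \<Rightarrow> (nat \<Rightarrow> nat) \<Rightarrow> (nat \<Rightarrow> nat) \<Rightarrow> (nat \<Rightarrow> nat) \<Rightarrow> bool" where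
  "phi_F m N n x y z \<longleftrightarrow> F_stat m N n x y z \<ge> 0"

end

theory Submission
  imports Defs
begin

lemma seqs_mem: "x \<in> seqs m k \<Longrightarrow> i < k \<Longrightarrow> x i \<in> {1..m}"
  unfolding seqs_def by (simp add: PiE_iff)
lemma finite_seqs: "finite (seqs m k)"
  unfolding seqs_def by (intro finite_PiE) auto
lemma sum_seqs_prod:
  "(\<Sum>x\<in>seqs m k. \<Prod>i<k. h i (x i)) = (\<Prod>i<k. \<Sum>j\<in>{1..m}. (h i j :: real))"
  unfolding seqs_def using prod_sum_PiE[of "{..<k}" "\<lambda>_. {1..m}" h] by simp
lemma seq_prob_nonneg: "is_dist m p \<Longrightarrow> x \<in> seqs m k \<Longrightarrow> seq_prob p k x \<ge> 0"
  unfolding seq_prob_def is_dist_def 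
  by (intro prod_nonneg) (meson lessThan_iff seqs_mem)

lemma seq_prob_total: "is_dist m p \<Longrightarrow> (\<Sum>x\<in>seqs m k. seq_prob p k x) = 1"
proof -
  assume "is_dist m p"
  then have "(\<Sum>j\<in>{1..m}. p j) = 1" by (simp add: is_dist_def)
  then show ?thesis
  unfolding seq_prob_def using sum_seqs_prod[where m=m and k=k and h="\<lambda>i j. p j"] by simp
qed
lemma seq_first:
  assumes "is_dist m p" "i < k"
  shows "(\<Sum>x\<in>seqs m k. seq_prob p k x * g (x i)) = (\<Sum>j\<in>{1..m}. p j * g j)"
proof -
  have "(\<Sum>x\<in>seqs m k. seq_prob p k x * g (x i))
      = (\<Sum>x\<in>seqs m k. \<Prod>i'<k. p (x i') * (if i' = i then g (x i') else 1))"
    using assms(2) by (simp add: seq_prob_def prod.distrib prod.delta)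
  also have "\<dots> = (\<Prod>i'<k. \<Sum>j\<in>{1..m}. p j * (if i' = i then g j else 1))"
    by (rule sum_seqs_prod)
  also have "\<dots> = (\<Prod>i'<k. if i' = i then (\<Sum>j\<in>{1..m}. p j * g j) else 1)"
    using assms(1) by (intro prod.cong) (auto simp: is_dist_def)
  also have "\<dots> = (\<Sum>j\<in>{1..m}. p j * g j)" using assms(2) by (simp add: prod.delta)
  finally show ?thesis .
qed

lemma seq_second:
  assumes "is_dist m p" "i < k" "i2 < k" "i \<noteq> i2"
  shows "(\<Sum>x\<in>seqs m k. seq_prob p k x * (g (x i) * g2 (x i2)))
       = (\<Sum>j\<in>{1..m}. p j * g j) * (\<Sum>j\<in>{1..m}. p j * g2 j)"
proof -
  have "(\<Sum>x\<in>seqs m k. seq_prob p k x * (g (x i) * g2 (x i2)))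
      = (\<Sum>x\<in>seqs m k. \<Prod>i'<k. p (x i') * ((if i' = i then g (x i') else 1) * (if i' = i2 then g2 (x i') else 1)))"
    using assms(2,3) by (simp add: seq_prob_def prod.distrib prod.delta)
  also have "\<dots> = (\<Prod>i'<k. \<Sum>j\<in>{1..m}. p j * ((if i' = i then g j else 1) * (if i' = i2 then g2 j else 1)))"
    by (rule sum_seqs_prod)
  also have "\<dots> = (\<Prod>i'<k. (if i' = i then (\<Sum>j\<in>{1..m}. p j * g j) else 1) * (if i' = i2 then (\<Sum>j\<in>{1..m}. p j * g2 j) else 1))"
    using assms(1,4) by (intro prod.cong) (auto simp: is_dist_def)
  also have "\<dots> = (\<Sum>j\<in>{1..m}. p j * g j) * (\<Sum>j\<in>{1..m}. p j * g2 j)"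
    using assms(2,3) by (simp add: prod.distrib prod.delta)
  finally show ?thesis .
qed

lemma seq_prefix:
  assumes "is_dist m p" "K \<le> k" "j0 \<in> {1..m}"
  shows "(\<Sum>x\<in>seqs m k. seq_prob p k x * (if \<forall>i<K. x i = j0 then 1 else 0)) = p j0 ^ K"
proof -
  have "(\<Sum>x\<in>seqs m k. seq_prob p k x * (if \<forall>i<K. x i = j0 then 1 else 0))
      = (\<Sum>x\<in>seqs m k. \<Prod>i<k. p (x i) * (if i < K then (if x i = j0 then 1 else 0) else 1))"
  proof (intro sum.cong refl)
    fix x
    have "(\<Prod>i<k. (if i < K then (if x i = j0 then 1 else 0) else 1)) = (if \<forall>i<K. x i = j0 then 1 else (0::real))"
    proof (cases "\<forall>i<K. x i = j0")
      case True then show ?thesis by (intro trans[OF prod.neutral]) auto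
    next
      case False
      then obtain i where "i < K" "x i \<noteq> j0" by auto
      then show ?thesis using assms(2) by (intro trans[OF prod_zero]) auto
    qed
    then show "seq_prob p k x * (if \<forall>i<K. x i = j0 then 1 else 0) = (\<Prod>i<k. p (x i) * (if i < K then (if x i = j0 then 1 else 0) else 1))"
      by (simp add: seq_prob_def prod.distrib)
  qed
  also have "\<dots> = (\<Prod>i<k. \<Sum>j\<in>{1..m}. p j * (if i < K then (if j = j0 then 1 else 0) else 1))"
    by (rule sum_seqs_prod)
  also have "\<dots> = (\<Prod>i<k. if i < K then p j0 else 1)"
  proof (intro prod.cong refl)
    fix i
    have "(\<Sum>j\<in>{1..m}. p j * (if j = j0 then 1 else 0)) = p j0"
      using assms(3) by (simp add: if_distrib sum.delta cong: if_cong)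
    then show "(\<Sum>j\<in>{1..m}. p j * (if i < K then (if j = j0 then 1 else 0) else 1)) = (if i < K then p j0 else 1)"
      using assms(1) by (cases "i < K") (auto simp: is_dist_def)
  qed
  also have "\<dots> = (\<Prod>i<K. p j0)"
  proof -
    have "{..<k} \<inter> {i. i < K} = {..<K}" using assms(2) by auto
    moreover have "{..<k} \<inter> - {i. i < K} = {K..<k}" by auto
    ultimately show ?thesis by (simp add: prod.If_cases)
  qed
  finally show ?thesis by simp
qed

lemma count_real: "real (count k x j) = (\<Sum>i<k. if x i = j then 1 else 0)"
proof -
  have "count k x j = card {i\<in>{..<k}. x i = j}" unfolding count_def by (rule arg_cong[where f=card]) auto
  then have "real (count k x j) = (\<Sum>i\<in>{i\<in>{..<k}. x i = j}. 1)" 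
    by (simp only: real_of_card)
  also have "\<dots> = (\<Sum>i<k. if x i = j then 1 else 0)" by (rule sum.inter_filter) simp
  finally show ?thesis .
qed

lemma count_cross:
  assumes "z \<in> seqs m k"
  shows "(\<Sum>j\<in>{1..m}. real (count k z j) * a j) = (\<Sum>i<k. (a (z i) :: real))"
proof -
  have "(\<Sum>j\<in>{1..m}. real (count k z j) * a j) = (\<Sum>j\<in>{1..m}. \<Sum>i<k. (if z i = j then a j else 0))"
    unfolding count_real sum_distrib_right by (intro sum.cong refl) simp
  also have "\<dots> = (\<Sum>i<k. \<Sum>j\<in>{1..m}. (if z i = j then a j else 0))" by (rule sum.swap)
  also have "\<dots> = (\<Sum>i<k. a (z i))"
  proof (intro sum.cong refl)
    fix i assume "i \<in> {..<k}"
    then have "z i \<in> {1..m}" using seqs_mem[OF assms] by simp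
    then show "(\<Sum>j\<in>{1..m}. (if z i = j then a j else 0)) = a (z i)"
      by (simp add: sum.delta')
  qed
  finally show ?thesis .
qed

lemma count_total:
  assumes "z \<in> seqs m k"
  shows "(\<Sum>j\<in>{1..m}. real (count k z j)) = real k"
  using count_cross[OF assms, of "\<lambda>_. 1"] by simp

lemma count_sq:
  assumes "z \<in> seqs m k"
  shows "(\<Sum>j\<in>{1..m}. real (count k z j) ^ 2) = (\<Sum>i<k. \<Sum>i'<k. if z i' = z i then 1 else 0)"
proof -
  have "(\<Sum>j\<in>{1..m}. real (count k z j) ^ 2) = (\<Sum>i<k. real (count k z (z i)))"
    using count_cross[OF assms, of "\<lambda>j. real (count k z j)"] by (simp add: power2_eq_square)
  also have "\<dots> = (\<Sum>i<k. \<Sum>i'<k. if z i' = z i then 1 else 0)"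
    by (simp only: count_real)
  finally show ?thesis .
qed

lemma exp_cross:
  assumes "is_dist m p"
  shows "(\<Sum>z\<in>seqs m k. seq_prob p k z * (\<Sum>i<k. a (z i))) = real k * (\<Sum>j\<in>{1..m}. p j * a j)"
proof -
  have "(\<Sum>z\<in>seqs m k. seq_prob p k z * (\<Sum>i<k. a (z i))) = (\<Sum>i<k. \<Sum>z\<in>seqs m k. seq_prob p k z * a (z i))"
    by (simp add: sum_distrib_left sum.swap[of _ "seqs m k"])
  also have "\<dots> = (\<Sum>i<k. \<Sum>j\<in>{1..m}. p j * a j)"
    using seq_first[OF assms] by simp
  finally show ?thesis by simp
qed

lemma exp_pair:
  assumes "is_dist m p" "i < k" "i' < k" "i \<noteq> i'"
  shows "(\<Sum>y\<in>seqs m k. seq_prob p k y * (if y i' = y i then 1 else 0)) = (\<Sum>j\<in>{1..m}. p j ^ 2)"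
proof -
  have "(\<Sum>y\<in>seqs m k. seq_prob p k y * (if y i' = y i then 1 else 0))
     = (\<Sum>y\<in>seqs m k. \<Sum>j\<in>{1..m}. seq_prob p k y * ((if y i' = j then 1 else 0) * (if y i = j then 1 else 0)))"
  proof (intro sum.cong refl)
    fix y assume "y \<in> seqs m k"
    then have "y i \<in> {1..m}" using seqs_mem[OF \<open>y \<in> seqs m k\<close> assms(2)] by simp
    have "(\<Sum>j\<in>{1..m}. ((if y i' = j then 1 else 0) * (if y i = j then 1 else (0::real))))
       = (\<Sum>j\<in>{1..m}. if j = y i then (if y i' = y i then 1 else 0) else 0)"
      by (intro sum.cong refl) auto
    also have "\<dots> = (if y i' = y i then 1 else 0)" using \<open>y i \<in> {1..m}\<close> by (simp add: sum.delta')
    finally have "(if y i' = y i then 1 else 0) = (\<Sum>j\<in>{1..m}. ((if y i' = j then 1 else 0) * (if y i = j then 1 else (0::real))))" by simp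
    then show "seq_prob p k y * (if y i' = y i then 1 else 0) = (\<Sum>j\<in>{1..m}. seq_prob p k y * ((if y i' = j then 1 else 0) * (if y i = j then 1 else 0)))"
      by (simp add: sum_distrib_left)
  qed
  also have "\<dots> = (\<Sum>j\<in>{1..m}. \<Sum>y\<in>seqs m k. seq_prob p k y * ((if y i' = j then 1 else 0) * (if y i = j then 1 else 0)))"
    by (rule sum.swap)
  also have "\<dots> = (\<Sum>j\<in>{1..m}. (\<Sum>l\<in>{1..m}. p l * (if l = j then 1 else 0)) * (\<Sum>l\<in>{1..m}. p l * (if l = j then 1 else 0)))"
  proof (intro sum.cong refl)
    fix j
    show "(\<Sum>y\<in>seqs m k. seq_prob p k y * ((if y i' = j then 1 else 0) * (if y i = j then 1 else 0))) = (\<Sum>l\<in>{1..m}. p l * (if l = j then 1 else 0)) * (\<Sum>l\<in>{1..m}. p l * (if l = j then 1 else 0))"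
      by (rule seq_second[OF assms(1,3,2) not_sym[OF assms(4)]])
  qed
  also have "\<dots> = (\<Sum>j\<in>{1..m}. p j ^ 2)"
    by (intro sum.cong refl) (simp add: if_distrib sum.delta power2_eq_square cong: if_cong)
  finally show ?thesis .
qed

lemma exp_sq:
  assumes "is_dist m p" "\<forall>j\<in>{1..m}. p j \<le> b" "b \<ge> 0"
  shows "(\<Sum>y\<in>seqs m k. seq_prob p k y * (\<Sum>j\<in>{1..m}. real (count k y j) ^ 2)) \<le> real k + real k ^ 2 * b"
proof -
  have pb: "(\<Sum>j\<in>{1..m}. p j ^ 2) \<le> b"
  proof -
    have "(\<Sum>j\<in>{1..m}. p j ^ 2) \<le> (\<Sum>j\<in>{1..m}. b * p j)"
      using assms unfolding is_dist_def power2_eq_square by (intro sum_mono mult_right_mono) auto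
    also have "\<dots> = b" using assms(1) by (simp add: is_dist_def sum_distrib_left[symmetric])
    finally show ?thesis .
  qed
  have "(\<Sum>y\<in>seqs m k. seq_prob p k y * (\<Sum>j\<in>{1..m}. real (count k y j) ^ 2))
      = (\<Sum>y\<in>seqs m k. \<Sum>i<k. \<Sum>i'<k. seq_prob p k y * (if y i' = y i then 1 else 0))"
  proof (intro sum.cong refl)
    fix y assume "y \<in> seqs m k"
    from count_sq[OF this] show "seq_prob p k y * (\<Sum>j\<in>{1..m}. real (count k y j) ^ 2) = (\<Sum>i<k. \<Sum>i'<k. seq_prob p k y * (if y i' = y i then 1 else 0))"
      by (simp add: sum_distrib_left)
  qed
  also have "\<dots> = (\<Sum>i<k. \<Sum>i'<k. \<Sum>y\<in>seqs m k. seq_prob p k y * (if y i' = y i then 1 else 0))"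
    by (simp add: sum.swap[of _ "seqs m k"])
  also have "\<dots> \<le> (\<Sum>i<k. \<Sum>i'<k. (if i' = i then 1 else 0) + b)"
  proof (intro sum_mono)
    fix i i' assume "i \<in> {..<k}" "i' \<in> {..<k}"
    show "(\<Sum>y\<in>seqs m k. seq_prob p k y * (if y i' = y i then 1 else 0)) \<le> (if i' = i then 1 else 0) + b"
    proof (cases "i' = i")
      case True then show ?thesis using seq_prob_total[OF assms(1)] assms(3) by simp
    next
      case False then show ?thesis using exp_pair[OF assms(1)] pb \<open>i \<in> _\<close> \<open>i' \<in> _\<close> by simp
    qed
  qed
  also have "\<dots> = real k + real k ^ 2 * b" by (simp add: sum.distrib power2_eq_square algebra_simps)
  finally show ?thesis .
qed

lemma F_stat_scale:
  assumes "n > 0"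
  shows "F_stat m n n x y z = ((\<Sum>j\<in>{1..m}. (real (count n z j) - real (count n x j))\<^sup>2)
     - (\<Sum>j\<in>{1..m}. (real (count n z j) - real (count n y j))\<^sup>2)) / real n ^ 2"
  unfolding F_stat_def using assms
  by (simp add: diff_divide_distrib[symmetric] power_divide sum_divide_distrib[symmetric])

lemma nat_sq_ge: "real (a::nat) ^ 2 \<ge> real a"
  by (cases a) (auto simp: power2_eq_square)

lemma nat_mm1: "real (a::nat) * (real a - 1) \<ge> 0"
  by (cases a) auto

lemma count_prefix:
  assumes "K \<le> n" "\<forall>i<K. x i = j0"
  shows "count n x j0 \<ge> K"
proof -
  have "{..<K} \<subseteq> {i. i < n \<and> x i = j0}" using assms by auto
  then have "card {..<K} \<le> card {i. i < n \<and> x i = j0}" by (intro card_mono) auto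
  then show ?thesis unfolding count_def by simp
qed

lemma key_pointwise:
  assumes xs: "x \<in> seqs m n" and ys: "y \<in> seqs m n" and zs: "z \<in> seqs m n" and "n > 0" "K \<le> n"
    and pre: "\<forall>i<K. x i = j0" and j0: "j0 \<in> {1..m}"
    and W: "(\<Sum>j\<in>{1..m}. real (count n y j) ^ 2) - real n + 2 * (\<Sum>i<n. real (count n x (z i)))
            \<le> real K * (real K - 1)"
  shows "phi_F m n n x y z"
proof -
  define cx where "cx j = real (count n x j)" for j
  define cy where "cy j = real (count n y j)" for j
  define cz where "cz j = real (count n z j)" for j
  have D: "(\<Sum>j\<in>{1..m}. (cz j - cx j)\<^sup>2) - (\<Sum>j\<in>{1..m}. (cz j - cy j)\<^sup>2)
      = (\<Sum>j\<in>{1..m}. cx j ^ 2 - cy j ^ 2 - 2 * (cz j * cx j) + 2 * (cz j * cy j))"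
    by (simp add: sum_subtractf[symmetric] power2_eq_square algebra_simps)
  also have "\<dots> \<ge> (\<Sum>j\<in>{1..m}. cx j ^ 2 - cy j ^ 2 - 2 * (cz j * cx j))"
    by (intro sum_mono) (simp add: cz_def cy_def)
  finally have D1: "(\<Sum>j\<in>{1..m}. (cz j - cx j)\<^sup>2) - (\<Sum>j\<in>{1..m}. (cz j - cy j)\<^sup>2)
      \<ge> (\<Sum>j\<in>{1..m}. cx j ^ 2) - (\<Sum>j\<in>{1..m}. cy j ^ 2) - 2 * (\<Sum>j\<in>{1..m}. cz j * cx j)"
    by (simp add: sum_subtractf sum_distrib_left)
  have cross: "(\<Sum>j\<in>{1..m}. cz j * cx j) = (\<Sum>i<n. cx (z i))"
    unfolding cz_def by (rule count_cross[OF zs])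
  have tot: "(\<Sum>j\<in>{1..m}. cx j) = real n" unfolding cx_def by (rule count_total[OF xs])
  have "(\<Sum>j\<in>{1..m}. cx j ^ 2) = (\<Sum>j\<in>{1..m}. cx j) + (\<Sum>j\<in>{1..m}. cx j * (cx j - 1))"
    by (simp add: sum.distrib[symmetric] power2_eq_square algebra_simps)
  moreover have "(\<Sum>j\<in>{1..m}. cx j * (cx j - 1)) \<ge> cx j0 * (cx j0 - 1)"
    using j0 by (intro member_le_sum) (auto simp: cx_def nat_mm1)
  moreover have "cx j0 * (cx j0 - 1) \<ge> real K * (real K - 1)"
  proof -
    have a: "cx j0 \<ge> real K" unfolding cx_def using count_prefix[OF \<open>K \<le> n\<close> pre] by simp
    show ?thesis
    proof (cases "K = 0")
      case True then show ?thesis using nat_mm1[of "count n x j0"] by (simp add: cx_def)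
    next
      case False
      then have "real K \<ge> 1" by simp
      then show ?thesis using a by (intro mult_mono) auto
    qed
  qed
  ultimately have X: "(\<Sum>j\<in>{1..m}. cx j ^ 2) \<ge> real n + real K * (real K - 1)"
    using tot by linarith
  have "(\<Sum>j\<in>{1..m}. (cz j - cx j)\<^sup>2) - (\<Sum>j\<in>{1..m}. (cz j - cy j)\<^sup>2) \<ge> 0"
    using D1 X W cross unfolding cx_def cy_def by linarith
  then show ?thesis unfolding phi_F_def using F_stat_scale[OF \<open>n > 0\<close>, of m x y z]
    unfolding cx_def cy_def cz_def by simp
qed

lemma markov_double:
  fixes P :: "'a \<Rightarrow> real" and Q :: "'b \<Rightarrow> real" and W :: "'a \<Rightarrow> 'b \<Rightarrow> real"
  assumes "finite Y" "finite Z" "\<forall>y\<in>Y. P y \<ge> 0" "\<forall>z\<in>Z. Q z \<ge> 0"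
    "sum P Y = 1" "sum Q Z = 1" "\<forall>y\<in>Y. \<forall>z\<in>Z. W y z \<ge> 0"
    "(\<Sum>y\<in>Y. \<Sum>z\<in>Z. P y * Q z * W y z) \<le> E" "t > 0"
  shows "(\<Sum>y\<in>Y. \<Sum>z\<in>Z. P y * Q z * (if W y z \<le> t then 1 else 0)) \<ge> 1 - E / t"
proof -
  have "(\<Sum>y\<in>Y. \<Sum>z\<in>Z. P y * Q z * (if W y z \<le> t then 1 else 0))
     \<ge> (\<Sum>y\<in>Y. \<Sum>z\<in>Z. P y * Q z * (1 - W y z / t))"
  proof (intro sum_mono mult_left_mono)
    fix y z assume "y \<in> Y" "z \<in> Z"
    then show "1 - W y z / t \<le> (if W y z \<le> t then 1 else 0)"
      using assms(7,9) by (auto simp: field_simps)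
    show "0 \<le> P y * Q z" using assms(3,4) \<open>y \<in> Y\<close> \<open>z \<in> Z\<close> by simp
  qed
  also have "(\<Sum>y\<in>Y. \<Sum>z\<in>Z. P y * Q z * (1 - W y z / t))
     = (\<Sum>y\<in>Y. \<Sum>z\<in>Z. P y * Q z) - (\<Sum>y\<in>Y. \<Sum>z\<in>Z. P y * Q z * W y z) / t"
    by (simp add: algebra_simps sum_subtractf sum_divide_distrib)
  also have "(\<Sum>y\<in>Y. \<Sum>z\<in>Z. P y * Q z) = 1"
    using assms(5,6) by (simp add: sum_distrib_left[symmetric] sum_distrib_right[symmetric])
  finally show ?thesis using assms(8,9) by (smt (verit) divide_right_mono)
qed

lemma double_sep:
  fixes P :: "'a \<Rightarrow> real" and Q :: "'b \<Rightarrow> real"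
  assumes "sum P Y = 1" "sum Q Z = 1"
  shows "(\<Sum>y\<in>Y. \<Sum>z\<in>Z. P y * Q z * (A y + C z)) = (\<Sum>y\<in>Y. P y * A y) + (\<Sum>z\<in>Z. Q z * C z)"
proof -
  have "(\<Sum>y\<in>Y. \<Sum>z\<in>Z. P y * Q z * (A y + C z)) = (\<Sum>y\<in>Y. P y * A y * (\<Sum>z\<in>Z. Q z) + P y * (\<Sum>z\<in>Z. Q z * C z))"
    by (simp add: algebra_simps sum.distrib sum_distrib_left)
  also have "\<dots> = (\<Sum>y\<in>Y. P y * A y) + (\<Sum>y\<in>Y. P y) * (\<Sum>z\<in>Z. Q z * C z)"
    using assms(2) by (simp add: sum.distrib sum_distrib_right)
  finally show ?thesis using assms(1) by simp
qed

lemma main_lower: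
  assumes dp: "is_dist m p" and dq: "is_dist m q"
    and bp: "\<forall>j\<in>{1..m}. p j \<le> c / real m" and bq: "\<forall>j\<in>{1..m}. q j \<le> c / real m"
    and c: "c > 0" and m: "m > 0" and n: "n > 0" and Kn: "K \<le> n" and j0: "j0 \<in> {1..m}"
    and KK: "real K * (real K - 1) \<ge> 6 * (c * real n ^ 2 / real m)"
  shows "prob_event m n n p q p (phi_F m n n) \<ge> p j0 ^ K / 2"
proof -
  define B where "B = c * real n ^ 2 / real m"
  have Bpos: "B > 0" unfolding B_def using c m n by simp
  define t where "t = 6 * B"
  define W where "W x y z = (\<Sum>j\<in>{1..m}. real (count n y j) ^ 2) - real n + 2 * (\<Sum>i<n. real (count n x (z i)))" for x y z
  have cm: "c / real m \<ge> 0" using c m by simp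
  have half: "(\<Sum>y\<in>seqs m n. \<Sum>z\<in>seqs m n. seq_prob q n y * seq_prob p n z * (if W x y z \<le> t then 1 else 0)) \<ge> 1/2"
    if xs: "x \<in> seqs m n" for x
  proof -
    have Wnn: "\<forall>y\<in>seqs m n. \<forall>z\<in>seqs m n. W x y z \<ge> 0"
    proof (intro ballI)
      fix y z assume ys: "y \<in> seqs m n" and "z \<in> seqs m n"
      have "(\<Sum>j\<in>{1..m}. real (count n y j) ^ 2) \<ge> (\<Sum>j\<in>{1..m}. real (count n y j))"
        by (intro sum_mono nat_sq_ge)
      moreover have "(\<Sum>i<n. real (count n x (z i))) \<ge> 0" by (intro sum_nonneg) simp
      ultimately show "W x y z \<ge> 0" unfolding W_def using count_total[OF ys] by linarith
    qed
    have EA: "(\<Sum>y\<in>seqs m n. seq_prob q n y * ((\<Sum>j\<in>{1..m}. real (count n y j) ^ 2) - real n)) \<le> B"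
    proof -
      have "(\<Sum>y\<in>seqs m n. seq_prob q n y * ((\<Sum>j\<in>{1..m}. real (count n y j) ^ 2) - real n))
          = (\<Sum>y\<in>seqs m n. seq_prob q n y * (\<Sum>j\<in>{1..m}. real (count n y j) ^ 2)) - real n"
        using seq_prob_total[OF dq, of n] by (simp add: right_diff_distrib sum_subtractf sum_distrib_right[symmetric])
      also have "\<dots> \<le> real n + real n ^ 2 * (c / real m) - real n"
        using exp_sq[OF dq bq cm, of n] by simp
      finally show ?thesis unfolding B_def by (simp add: mult.commute)
    qed
    have EC: "(\<Sum>z\<in>seqs m n. seq_prob p n z * (2 * (\<Sum>i<n. real (count n x (z i))))) \<le> 2 * B"
    proof -
      have "(\<Sum>z\<in>seqs m n. seq_prob p n z * (2 * (\<Sum>i<n. real (count n x (z i)))))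
          = 2 * (\<Sum>z\<in>seqs m n. seq_prob p n z * (\<Sum>i<n. real (count n x (z i))))"
        by (simp add: sum_distrib_left algebra_simps)
      also have "\<dots> = 2 * (real n * (\<Sum>j\<in>{1..m}. p j * real (count n x j)))"
        using exp_cross[OF dp, of n "\<lambda>j. real (count n x j)"] by simp
      also have "\<dots> \<le> 2 * (real n * (\<Sum>j\<in>{1..m}. c / real m * real (count n x j)))"
        using bp by (intro mult_left_mono sum_mono mult_right_mono) auto
      also have "\<dots> = 2 * B"
      proof -
        have "(\<Sum>j\<in>{1..m}. c / real m * real (count n x j)) = c / real m * real n"
          by (simp only: sum_distrib_left[symmetric] count_total[OF xs])
        then show ?thesis unfolding B_def by (simp add: power2_eq_square)
      qed
      finally show ?thesis .
    qed
    have EW: "(\<Sum>y\<in>seqs m n. \<Sum>z\<in>seqs m n. seq_prob q n y * seq_prob p n z * W x y z) \<le> 3 * B"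
    proof -
      have "(\<Sum>y\<in>seqs m n. \<Sum>z\<in>seqs m n. seq_prob q n y * seq_prob p n z * W x y z)
          = (\<Sum>y\<in>seqs m n. seq_prob q n y * ((\<Sum>j\<in>{1..m}. real (count n y j) ^ 2) - real n))
          + (\<Sum>z\<in>seqs m n. seq_prob p n z * (2 * (\<Sum>i<n. real (count n x (z i)))))"
        unfolding W_def by (rule double_sep[OF seq_prob_total[OF dq] seq_prob_total[OF dp]])
      then show ?thesis using EA EC by linarith
    qed
    have "(\<Sum>y\<in>seqs m n. \<Sum>z\<in>seqs m n. seq_prob q n y * seq_prob p n z * (if W x y z \<le> t then 1 else 0)) \<ge> 1 - 3 * B / t"
      by (rule markov_double[OF finite_seqs finite_seqs _ _ seq_prob_total[OF dq] seq_prob_total[OF dp] Wnn EW])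
         (use seq_prob_nonneg[OF dq] seq_prob_nonneg[OF dp] Bpos in \<open>auto simp: t_def\<close>)
    also have "1 - 3 * B / t = 1/2" unfolding t_def using Bpos by simp
    finally show ?thesis .
  qed
  define pre where "pre x = (if \<forall>i<K. x i = j0 then 1 else (0::real))" for x
  have "prob_event m n n p q p (phi_F m n n) = (\<Sum>x\<in>seqs m n. \<Sum>y\<in>seqs m n. \<Sum>z\<in>seqs m n.
        seq_prob p n x * seq_prob q n y * seq_prob p n z * (if phi_F m n n x y z then 1 else 0))"
    unfolding prob_event_def by simp
  also have "\<dots> \<ge> (\<Sum>x\<in>seqs m n. \<Sum>y\<in>seqs m n. \<Sum>z\<in>seqs m n.
        seq_prob p n x * pre x * (seq_prob q n y * seq_prob p n z * (if W x y z \<le> t then 1 else 0)))"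
  proof (intro sum_mono)
    fix x y z assume xs: "x \<in> seqs m n" and ys: "y \<in> seqs m n" and zs: "z \<in> seqs m n"
    have nn: "seq_prob p n x * seq_prob q n y * seq_prob p n z \<ge> 0"
      using seq_prob_nonneg[OF dp xs] seq_prob_nonneg[OF dq ys] seq_prob_nonneg[OF dp zs] by simp
    show "seq_prob p n x * pre x * (seq_prob q n y * seq_prob p n z * (if W x y z \<le> t then 1 else 0))
        \<le> seq_prob p n x * seq_prob q n y * seq_prob p n z * (if phi_F m n n x y z then 1 else 0)"
    proof (cases "(\<forall>i<K. x i = j0) \<and> W x y z \<le> t")
      case True
      then have "phi_F m n n x y z"
        using key_pointwise[OF xs ys zs n Kn _ j0] KK unfolding W_def t_def B_def by auto
      then show ?thesis using True by (simp add: pre_def)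
    next
      case False
      then show ?thesis using nn by (auto simp: pre_def)
    qed
  qed
  also have "(\<Sum>x\<in>seqs m n. \<Sum>y\<in>seqs m n. \<Sum>z\<in>seqs m n.
        seq_prob p n x * pre x * (seq_prob q n y * seq_prob p n z * (if W x y z \<le> t then 1 else 0)))
      = (\<Sum>x\<in>seqs m n. seq_prob p n x * pre x * (\<Sum>y\<in>seqs m n. \<Sum>z\<in>seqs m n. seq_prob q n y * seq_prob p n z * (if W x y z \<le> t then 1 else 0)))"
    by (simp add: sum_distrib_left)
  also have "\<dots> \<ge> (\<Sum>x\<in>seqs m n. seq_prob p n x * pre x * (1/2))"
    using half seq_prob_nonneg[OF dp] by (intro sum_mono mult_left_mono) (auto simp: pre_def)
  also have "(\<Sum>x\<in>seqs m n. seq_prob p n x * pre x * (1/2)) = p j0 ^ K / 2"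
    using seq_prefix[OF dp Kn j0] unfolding pre_def by (simp add: sum_divide_distrib[symmetric])
  finally show ?thesis .
qed

lemma prob_event_bounds:
  assumes "is_dist m p" "is_dist m q" "is_dist m r"
  shows "prob_event m N n p q r E \<le> 1" "prob_event m N n p q r E \<ge> 0"
proof -
  have nn: "\<And>x y z. x \<in> seqs m N \<Longrightarrow> y \<in> seqs m N \<Longrightarrow> z \<in> seqs m n \<Longrightarrow>
      seq_prob p N x * seq_prob q N y * seq_prob r n z \<ge> 0"
    using seq_prob_nonneg assms by (metis mult_nonneg_nonneg)
  have "prob_event m N n p q r E \<le> (\<Sum>x\<in>seqs m N. \<Sum>y\<in>seqs m N. \<Sum>z\<in>seqs m n.
        seq_prob p N x * seq_prob q N y * seq_prob r n z)"
    unfolding prob_event_def by (intro sum_mono) (use nn in auto)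
  also have "\<dots> = (\<Sum>x\<in>seqs m N. seq_prob p N x * ((\<Sum>y\<in>seqs m N. seq_prob q N y * (\<Sum>z\<in>seqs m n. seq_prob r n z))))"
    by (simp add: sum_distrib_left mult.assoc)
  also have "\<dots> = 1" using seq_prob_total assms by simp
  finally show "prob_event m N n p q r E \<le> 1" .
  show "prob_event m N n p q r E \<ge> 0"
    unfolding prob_event_def by (intro sum_nonneg) (use nn in auto)
qed

lemma avg_err_bounds:
  assumes "(p, q) \<in> Pclass m \<epsilon> c"
  shows "avg_err m N n \<phi> p q \<le> 1" "avg_err m N n \<phi> p q \<ge> 0"
proof -
  have d: "is_dist m p" "is_dist m q" using assms unfolding Pclass_def by auto
  show "avg_err m N n \<phi> p q \<le> 1" unfolding avg_err_def
    using prob_event_bounds(1)[OF d(1) d(2) d(1), of N n \<phi>] prob_event_bounds(1)[OF d(1) d(2) d(2), of N n "\<lambda>x y z. \<not> \<phi> x y z"]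
    by simp
  show "avg_err m N n \<phi> p q \<ge> 0" unfolding avg_err_def
    using prob_event_bounds(2)[OF d(1) d(2) d(1), of N n \<phi>] prob_event_bounds(2)[OF d(1) d(2) d(2), of N n "\<lambda>x y z. \<not> \<phi> x y z"]
    by simp
qed

lemma worst_err_le1:
  assumes "Pclass m \<epsilon> c \<noteq> {}"
  shows "worst_err m N n \<epsilon> c \<phi> \<le> 1"
  unfolding worst_err_def using assms avg_err_bounds(1)
  by (intro cSup_least) auto

lemma worst_err_ge:
  assumes "(p, q) \<in> Pclass m \<epsilon> c"
  shows "worst_err m N n \<epsilon> c \<phi> \<ge> avg_err m N n \<phi> p q"
  unfolding worst_err_def
proof (rule cSup_upper)
  show "avg_err m N n \<phi> p q \<in> (\<lambda>(p, q). avg_err m N n \<phi> p q) ` Pclass m \<epsilon> c"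
    using assms by force
  show "bdd_above ((\<lambda>(p, q). avg_err m N n \<phi> p q) ` Pclass m \<epsilon> c)"
    using avg_err_bounds(1) by (intro bdd_aboveI[of _ 1]) auto
qed

lemma exists_big:
  assumes "is_dist m p" "m > 0"
  shows "\<exists>j0\<in>{1..m}. p j0 \<ge> 1 / real m"
proof (rule ccontr)
  assume "\<not> ?thesis"
  then have "\<forall>j\<in>{1..m}. p j < 1 / real m" by auto
  then have "(\<Sum>j\<in>{1..m}. p j) < (\<Sum>j\<in>{1..m}. 1 / real m)"
    using assms(2) by (intro sum_strict_mono) auto
  then show False using assms unfolding is_dist_def by simp
qed

lemma asym_bound:
  fixes m n K c :: real
  assumes m: "m \<ge> 1" and n: "n \<ge> 1" and mn: "m \<le> n^2" and c: "c > 0"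
    and K: "K \<le> sqrt (6 * c * n^2 / m) + 2" "K \<ge> 0"
  shows "(ln 4 + K * ln m) / (n^2 / m) \<le> ln 4 * (m / n^2) + 2 * sqrt (6 * c) * sqrt (m * (ln n)^2 / n^2)
          + 4 * (sqrt (m * (ln n)^2 / n^2) * sqrt (m / n^2))"
proof -
  define a where "a = sqrt m"
  have a: "a > 0" "a^2 = m" unfolding a_def using m by auto
  have ln0: "ln m \<ge> 0" "ln n \<ge> 0" using m n by auto
  have lnm: "ln m \<le> 2 * ln n"
  proof -
    have "ln m \<le> ln (n^2)" using m mn by (subst ln_le_cancel_iff) auto
    also have "\<dots> = 2 * ln n" using n by (simp add: ln_realpow)
    finally show ?thesis .
  qed
  have s1: "sqrt (6 * c * n^2 / m) = sqrt (6 * c) * n / a"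
    using n a by (simp add: real_sqrt_mult real_sqrt_divide a_def)
  have s2: "sqrt (m * (ln n)^2 / n^2) = a * ln n / n"
    using n ln0 by (simp add: real_sqrt_mult real_sqrt_divide a_def)
  have s3: "sqrt (m / n^2) = a / n"
    using n by (simp add: real_sqrt_divide a_def)
  have "(ln 4 + K * ln m) / (n^2 / m) = ln 4 * (m / n^2) + K * ln m * m / n^2"
    using n m by (simp add: field_simps)
  also have "K * ln m * m / n^2 \<le> (sqrt (6 * c) * n / a + 2) * (2 * ln n) * m / n^2"
    using K s1 ln0 lnm m n
    by (intro divide_right_mono mult_right_mono mult_mono) auto
  also have "\<dots> = 2 * sqrt (6 * c) * (a * ln n / n) + 4 * ((a * ln n / n) * (a / n))"
    using a n by (simp add: field_simps power2_eq_square a(2)[symmetric])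
  finally show ?thesis unfolding s1 s2 s3 by simp
qed

theorem theorem4:
  fixes n :: "nat \<Rightarrow> nat" and \<epsilon> c :: real
  assumes eps_pos: "\<epsilon> > 0" and c_pos: "c > 0"
    and n_lim: "filterlim n at_top at_top"
    and n_small: "(\<lambda>m. real (n m)) \<in> o(\<lambda>m. real m)"
    and m_small: "(\<lambda>m. real m) \<in> o(\<lambda>m. real (n m) ^ 2)"
    and m_small_log: "(\<lambda>m. real m) \<in> o(\<lambda>m. real (n m) ^ 2 / (ln (real (n m)))^2)"
    and nonempty: "eventually (\<lambda>m. Pclass m \<epsilon> c \<noteq> {}) at_top"
  shows "err_exponent n n \<epsilon> c (\<lambda>m. phi_F m (n m) (n m)) = 0"
proof -
  define u where "u m = real m * (ln (real (n m)))^2 / real (n m)^2" for m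
  define v where "v m = real m / real (n m)^2" for m
  define g where "g m = ln 4 * v m + 2 * sqrt (6 * c) * sqrt (u m) + 4 * (sqrt (u m) * sqrt (v m))" for m
  define a where "a m = elog (worst_err m (n m) (n m) \<epsilon> c (phi_F m (n m) (n m))) / ereal (rate (n m) (n m) m)" for m
  have v0: "v \<longlonglongrightarrow> 0" unfolding v_def using smalloD_tendsto[OF m_small] by simp
  have u0: "u \<longlonglongrightarrow> 0" unfolding u_def using smalloD_tendsto[OF m_small_log]
    by (simp add: divide_divide_eq_right)
  have "g \<longlonglongrightarrow> ln 4 * 0 + 2 * sqrt (6 * c) * sqrt 0 + 4 * (sqrt 0 * sqrt 0)"
    unfolding g_def by (intro tendsto_intros u0 v0)
  then have g0: "g \<longlonglongrightarrow> 0" by simp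
  have ev1: "eventually (\<lambda>m. m \<ge> nat \<lceil>24 * c\<rceil> + 1) at_top" by (rule eventually_ge_at_top)
  have ev2: "eventually (\<lambda>m. 4 \<le> n m) at_top" using n_lim by (simp add: filterlim_at_top)
  have ev4: "eventually (\<lambda>m. norm (real m) \<le> 1 * norm (real (n m) ^ 2)) at_top"
    by (rule landau_o.smallD[OF m_small]) simp
  have main: "eventually (\<lambda>m. ereal (- g m) \<le> a m \<and> a m \<le> 0) at_top"
    using ev1 ev2 ev4 nonempty
  proof eventually_elim
    case (elim m)
    define N where "N = n m"
    define M where "M = real m"
    have N4: "real N \<ge> 4" using elim(2) unfolding N_def by simp
    have M1: "M \<ge> 1" using elim(1) unfolding M_def by simp
    have m0: "m > 0" using elim(1) by simp
    have M24: "M \<ge> 24 * c"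
    proof -
      have "24 * c \<le> real (nat \<lceil>24 * c\<rceil>)" by linarith
      then show ?thesis using elim(1) unfolding M_def by linarith
    qed
    have MN: "M \<le> real N ^ 2" using elim(3) unfolding M_def N_def by simp
    obtain p q where pq: "(p, q) \<in> Pclass m \<epsilon> c" using elim(4) by auto
    have dp: "is_dist m p" and dq: "is_dist m q" and bp: "\<forall>j\<in>{1..m}. p j \<le> c / real m"
      and bq: "\<forall>j\<in>{1..m}. q j \<le> c / real m" using pq unfolding Pclass_def by auto
    obtain j0 where j0: "j0 \<in> {1..m}" "p j0 \<ge> 1 / real m" using exists_big[OF dp m0] by auto
    define s where "s = sqrt (6 * c * real N ^ 2 / M)"
    define K where "K = nat \<lceil>s\<rceil> + 1"
    have s0: "s \<ge> 0" unfolding s_def using c_pos M1 by simp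
    have Ks: "real K \<ge> s + 1" "real K \<le> s + 2" unfolding K_def using s0 by linarith+
    have ss: "s * s = 6 * c * real N ^ 2 / M" unfolding s_def using c_pos M1 by simp
    have KK: "real K * (real K - 1) \<ge> 6 * (c * real N ^ 2 / M)"
    proof -
      have "s * s \<le> real K * (real K - 1)" using Ks s0 by (intro mult_mono) auto
      then show ?thesis using ss by simp
    qed
    have sN: "s \<le> real N / 2"
    proof -
      have cm: "6 * c / M \<le> 1 / 4" using M24 M1 by (simp add: field_simps)
      have "6 * c * real N ^ 2 / M = (6 * c / M) * real N ^ 2" by simp
      also have "\<dots> \<le> (1 / 4) * real N ^ 2" using cm by (intro mult_right_mono) auto
      also have "\<dots> = (real N / 2) ^ 2" by (simp add: power2_eq_square)
      finally have "6 * c * real N ^ 2 / M \<le> (real N / 2) ^ 2" .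
      then have "s \<le> sqrt ((real N / 2) ^ 2)" unfolding s_def by (rule real_sqrt_le_mono)
      then show ?thesis using N4 by simp
    qed
    have KN: "K \<le> N" using Ks sN N4 by linarith
    have N0: "N > 0" using N4 by simp
    have pe: "prob_event m N N p q p (phi_F m N N) \<ge> p j0 ^ K / 2"
      by (rule main_lower[OF dp dq bp bq c_pos m0 N0 KN j0(1)]) (use KK in \<open>simp add: M_def\<close>)
    have pK: "p j0 ^ K \<ge> (1 / M) ^ K" unfolding M_def using j0(2) m0 by (intro power_mono) auto
    have "avg_err m N N (phi_F m N N) p q \<ge> 1/2 * prob_event m N N p q p (phi_F m N N)"
      unfolding avg_err_def using prob_event_bounds(2)[OF dp dq dq, of N N] by simp
    then have avg: "avg_err m N N (phi_F m N N) p q \<ge> (1 / M) ^ K / 4" using pe pK by simp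
    define w where "w = worst_err m N N \<epsilon> c (phi_F m N N)"
    have wge: "w \<ge> (1 / M) ^ K / 4" unfolding w_def using worst_err_ge[OF pq, of N N "phi_F m N N"] avg by simp
    have wpos: "w > 0" using wge M1 by (smt (verit) zero_less_divide_iff zero_less_power)
    have wle: "w \<le> 1" unfolding w_def using worst_err_le1 elim(4) by blast
    define r where "r = real N ^ 2 / M"
    have rate: "rate N N m = r" unfolding rate_def r_def M_def by (simp add: power2_eq_square)
    have rpos: "r > 0" unfolding r_def using N0 M1 by simp
    have am: "a m = ereal (ln w / r)"
      unfolding a_def using wpos rpos rate by (simp add: elog_def w_def N_def)
    have lnw: "ln w \<ge> - (ln 4 + real K * ln M)"
    proof -
      have "ln ((1 / M) ^ K / 4) \<le> ln w" using wge M1 wpos by (subst ln_le_cancel_iff) auto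
      moreover have "ln ((1 / M) ^ K / 4) = - (ln 4 + real K * ln M)"
      proof -
        have h1: "ln ((1/M)^K/4) = ln ((1/M)^K) - ln 4" using M1 by (intro ln_divide_pos) auto
        have h2: "ln ((1/M)^K) = real K * ln (1/M)" by (rule ln_realpow)
        have h3: "ln (1/M) = - ln M" using M1 by (simp add: ln_divide_pos)
        show ?thesis unfolding h1 h2 h3 by simp
      qed
      ultimately show ?thesis by simp
    qed
    have "(ln 4 + real K * ln M) / (real N ^ 2 / M) \<le> g m"
      unfolding g_def u_def v_def N_def[symmetric] M_def[symmetric]
      by (rule asym_bound) (use M1 N4 MN c_pos Ks in \<open>auto simp: s_def\<close>)
    then have "ln w / r \<ge> - g m"
      using lnw rpos unfolding r_def by (smt (verit) divide_right_mono divide_minus_left)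
    moreover have "ln w / r \<le> 0" using wpos wle rpos by (simp add: divide_nonpos_pos)
    ultimately show ?case unfolding am by simp
  qed
  have "a \<longlonglongrightarrow> 0"
  proof (rule tendsto_sandwich)
    show "eventually (\<lambda>m. ereal (- g m) \<le> a m) sequentially" using main by (rule eventually_mono) simp
    show "eventually (\<lambda>m. a m \<le> 0) sequentially" using main by (rule eventually_mono) simp
    have "(\<lambda>m. ereal (- g m)) \<longlonglongrightarrow> ereal (- 0)" by (intro tendsto_ereal tendsto_minus g0)
    then show "(\<lambda>m. ereal (- g m)) \<longlonglongrightarrow> 0" by (simp add: zero_ereal_def)
  qed simp
  then have "limsup a = 0" by (intro lim_imp_Limsup) auto
  then show ?thesis unfolding err_exponent_def a_def by simp
qed

end
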